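(* Let $\mathbb{F}_q$ be a finite field and, for $\alpha\in\mathbb{F}_q^*$, let $N_{\mathbb{A}_n}(\alpha)$ be the number of $\mathbb{F}_q$-points of $X_n(\alpha)$. If $n$ is even, then $N_{\mathbb{A}_n}(\alpha)=\frac{q^{n+2}-1}{q^2-1}$ (independently of $\alpha$). If $n$ is odd and $\alpha\neq(-1)^{(n+1)/2}$, then $N_{\mathbb{A}_n}(\alpha)=\frac{(q^{(n+1)/2}-1)(q^{(n+3)/2}-1)}{q^2-1}$. If $n$ is odd, then $N_{\mathbb{A}_n}((-1)^{(n+1)/2})=\frac{(q^{(n+1)/2}-1)(q^{(n+3)/2}-1)}{q^2-1}+q^{(n+1)/2}$.
   Context: For $\alpha$ invertible in a field $\mathbb{K}$ and $n\ge1$, $X_n(\alpha)$ is the affine variety in variables $x_1,\dots,x_n,x'_1,\dots,x'_n$ defined by $x_1x'_1=1+\alpha x_2$, $x_ix'_i=1+x_{i-1}x_{i+1}$ for $2\le i\le n-1$, $x_nx'_n=1+x_{n-1}$ (for $n=1$: $x_1x'_1=1+\alpha$). By convention $X_0(\alpha)$ is a point. For $n$ even, $X_n(\alpha)$ does not depend on $\alpha$ up to isomorphism. *)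

theory Defs
  imports Complex_Main "HOL-Library.Cardinality"
begin

definition coord :: "'a list \<Rightarrow> nat \<Rightarrow> 'a" where
  "coord xs i = xs ! (i - 1)"

definition X_eq :: "'a::field \<Rightarrow> nat \<Rightarrow> 'a list \<Rightarrow> 'a list \<Rightarrow> nat \<Rightarrow> bool" where
  "X_eq alpha n x x' i =
     (if n = 1 then coord x 1 * coord x' 1 = 1 + alpha
      else if i = 1 then coord x 1 * coord x' 1 = 1 + alpha * coord x 2
      else if i = n then coord x n * coord x' n = 1 + coord x (n - 1)
      else coord x i * coord x' i = 1 + coord x (i - 1) * coord x (i + 1))"

definition X_points :: "nat \<Rightarrow> 'a::field \<Rightarrow> ('a list \<times> 'a list) set" where
  "X_points n alpha = {(x, x'). length x = n \<and> length x' = n \<and> (\<forall>i\<in>{1..n}. X_eq alpha n x x' i)}"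

definition N_A :: "nat \<Rightarrow> 'a::{finite,field} \<Rightarrow> nat" where
  "N_A n alpha = card (X_points n alpha)"

end

theory Submission
  imports Defs
begin

fun ch :: "'a::field \<Rightarrow> 'a list \<Rightarrow> 'a list \<Rightarrow> bool" where
  "ch a [] [] = True"
| "ch a [x] [x'] = (x*x' = 1 + a)"
| "ch a (x#y#xs) (x'#ys) = (x*x' = 1 + a*y \<and> ch x (y#xs) ys)"
| "ch a _ _ = False"

lemma ch_len: "ch a x x' \<Longrightarrow> length x' = length x"
  by (induction a x x' rule: ch.induct) auto

lemma ch_idx:
  "length x = Suc m \<Longrightarrow> length x' = Suc m \<Longrightarrow>
   ch a x x' \<longleftrightarrow> (\<forall>i<Suc m. x!i * x'!i = 1 + (if i=0 then a else x!(i-1)) * (if i=m then 1 else x!(i+1)))"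
proof (induction x arbitrary: a x' m)
  case Nil then show ?case by simp
next
  case (Cons x0 xs)
  show ?case
  proof (cases xs)
    case Nil
    with Cons.prems obtain x0' where "x' = [x0']" by (cases x') (auto simp: length_Suc_conv)
    with Nil Cons.prems show ?thesis by auto
  next
    case (Cons y zs)
    from Cons.prems obtain x0' ys where x': "x' = x0' # ys" by (cases x') auto
    from Cons.prems \<open>xs = y#zs\<close> obtain m' where m: "m = Suc m'" by auto
    have IH: "ch x0 (y#zs) ys \<longleftrightarrow> (\<forall>i<Suc m'. (y#zs)!i * ys!i = 1 + (if i=0 then x0 else (y#zs)!(i-1)) * (if i=m' then 1 else (y#zs)!(i+1)))"
      using Cons.IH[of m' ys x0] Cons.prems \<open>xs = y#zs\<close> x' m by auto
    show ?thesis
      unfolding x' \<open>xs = y#zs\<close> m ch.simps IH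
      apply (subst All_less_Suc2[of "Suc m'"])
      apply (rule conj_cong, simp)
      apply (rule all_cong)
      apply (auto simp: nth_Cons' split: if_splits)
      done
  qed
qed

definition T :: "nat \<Rightarrow> 'a::field \<Rightarrow> ('a list \<times> 'a list) set" where
  "T n a = {(x,x'). length x = n \<and> ch a x x'}"

lemma X_eq_T:
  assumes "n \<ge> 1"
  shows "X_points n \<alpha> = T n \<alpha>"
proof (rule set_eqI, clarify)
  fix x x' :: "'a list"
  obtain m where n: "n = Suc m" using assms by (cases n) auto
  have "(x,x') \<in> X_points n \<alpha> \<longleftrightarrow> length x = n \<and> length x' = n \<and> (\<forall>i<n. X_eq \<alpha> n x x' (Suc i))"
    unfolding X_points_def by (auto simp: Ball_def) (metis Suc_pred le_eq_less_or_eq less_eq_Suc_le not_le not_less_eq_eq)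
  also have "\<dots> \<longleftrightarrow> length x = n \<and> length x' = n \<and> (\<forall>i<Suc m. x!i * x'!i = 1 + (if i=0 then \<alpha> else x!(i-1)) * (if i=m then 1 else x!(i+1)))"
    unfolding n X_eq_def coord_def
    by (intro conj_cong refl all_cong) (auto simp: nth_Cons')
  also have "\<dots> \<longleftrightarrow> (x,x') \<in> T n \<alpha>"
    unfolding T_def using ch_idx[of x m x' \<alpha>] ch_len[of \<alpha> x x'] n by auto
  finally show "(x,x') \<in> X_points n \<alpha> \<longleftrightarrow> (x,x') \<in> T n \<alpha>" .
qed

lemma T_finite: "finite (T n (a::'a::{finite,field}))"
proof -
  have "T n a \<subseteq> {x. set x \<subseteq> UNIV \<and> length x = n} \<times> {x. set x \<subseteq> UNIV \<and> length x = n}"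
    unfolding T_def using ch_len by fastforce
  then show ?thesis
    by (rule finite_subset) (intro finite_cartesian_product finite_lists_length_eq; simp)+
qed

lemma T0: "T 0 a = {([],[])}"
  unfolding T_def by (auto elim: ch.elims)

lemma card_T0: "card (T 0 a) = 1" by (simp add: T0)

lemma card_xy:
  fixes c :: "'a::{finite,field}"
  shows "card {(x,x'::'a). x*x' = c} = (if c = 0 then 2*CARD('a) - 1 else CARD('a) - 1)"
proof (cases "c = 0")
  case True
  have "{(x,x'::'a). x*x' = c} = ({0} \<times> UNIV) \<union> ((UNIV - {0}) \<times> {0})" using True by auto
  moreover have "card (({0::'a} \<times> UNIV) \<union> ((UNIV - {0}) \<times> {0::'a})) = CARD('a) + (CARD('a) - 1)"
    by (subst card_Un_disjoint) (auto simp: card_cartesian_product)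
  moreover have "CARD('a) \<ge> 1" by (simp add: Suc_leI)
  ultimately show ?thesis using True by simp
next
  case False
  have "{(x,x'::'a). x*x' = c} = (\<lambda>x. (x, c/x)) ` (UNIV - {0})" using False
    by (auto simp: image_def field_simps)
  moreover have "card ((\<lambda>x::'a. (x, c/x)) ` (UNIV - {0})) = CARD('a) - 1"
    by (subst card_image) (auto simp: inj_on_def)
  ultimately show ?thesis using False by simp
qed

lemma card_T1:
  fixes a :: "'a::{finite,field}"
  shows "card (T 1 a) = CARD('a) - 1 + (if a = -1 then CARD('a) else 0)"
proof -
  have "T 1 a = (\<lambda>(x,x'). ([x],[x'])) ` {(x,x'). x*x' = 1 + a}"
    unfolding T_def by (auto simp: length_Suc_conv image_def elim: ch.elims)
  moreover have "card ((\<lambda>(x,x'). ([x],[x'])) ` {(x,x'::'a). x*x' = 1 + a}) = card {(x,x'::'a). x*x' = 1 + a}"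
    by (rule card_image) (auto simp: inj_on_def)
  moreover have "1 + a = 0 \<longleftrightarrow> a = -1" by (metis add.commute add_eq_0_iff)
  moreover have "CARD('a) \<ge> 1" by (simp add: Suc_leI)
  ultimately show ?thesis by (simp add: card_xy mult_2)
qed

lemma ch_cons2: "ch a (x#y#xs) x' \<longleftrightarrow> (\<exists>x0 ys. x' = x0#ys \<and> x*x0 = 1 + a*y \<and> ch x (y#xs) ys)"
  by (cases x') auto

lemma ch_cons0: "ch 0 (c#xs) x' \<longleftrightarrow> (\<exists>c' ys. x' = c'#ys \<and> c*c' = 1 \<and> ch c xs ys)"
  by (cases xs; cases x') (auto elim: ch.elims)

lemma T_hd:
  fixes c :: "'a::field"
  assumes "c \<noteq> 0"
  shows "{p\<in>T (Suc m) 0. hd (fst p) = c} = (\<lambda>(xs,ys). (c#xs, (1/c)#ys)) ` T m c"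
proof (rule set_eqI, clarify)
  fix x x' :: "'a list"
  show "((x,x') \<in> {p\<in>T (Suc m) 0. hd (fst p) = c}) = ((x,x') \<in> (\<lambda>(xs,ys). (c#xs, (1/c)#ys)) ` T m c)"
  proof
    assume "(x,x') \<in> {p\<in>T (Suc m) 0. hd (fst p) = c}"
    then obtain xs where x: "x = c#xs" "length xs = m" "ch 0 (c#xs) x'" unfolding T_def
      by (cases x) auto
    then obtain c' ys where "x' = c'#ys" "c*c' = 1" "ch c xs ys" using ch_cons0 by metis
    moreover have "c' = 1/c" using \<open>c*c' = 1\<close> assms by (simp add: field_simps)
    ultimately show "(x,x') \<in> (\<lambda>(xs,ys). (c#xs, (1/c)#ys)) ` T m c"
      using x unfolding T_def by (auto simp: image_def)
  next
    assume "(x,x') \<in> (\<lambda>(xs,ys). (c#xs, (1/c)#ys)) ` T m c"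
    then show "(x,x') \<in> {p\<in>T (Suc m) 0. hd (fst p) = c}"
      unfolding T_def using assms by (auto simp: ch_cons0)
  qed
qed

lemma card_T_hd:
  fixes c :: "'a::{finite,field}"
  assumes "c \<noteq> 0"
  shows "card {p\<in>T (Suc m) 0. hd (fst p) = c} = card (T m c)"
  unfolding T_hd[OF assms] by (rule card_image) (auto simp: inj_on_def)

lemma card_T_step:
  fixes a :: "'a::{finite,field}"
  assumes "a \<noteq> 0"
  shows "card (T (Suc (Suc m)) a) = (\<Sum>y\<in>UNIV-{0}. card (T (Suc m) (y::'a))) + CARD('a) * card (T m (-1/a))"
proof -
  define f where "f y = (\<lambda>(xs,ys). (y#xs, ((1 + a*hd xs)/y)#ys))" for y :: 'a
  define A where "A = (\<Union>y\<in>UNIV-{0}. f y ` T (Suc m) y)"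
  define Bs where "Bs = {p\<in>T (Suc m) 0. hd (fst p) = -1/a}"
  define B where "B = (\<lambda>((xs,ys),z). (0#xs, z#ys)) ` (Bs \<times> (UNIV::'a set))"
  have split: "T (Suc (Suc m)) a = A \<union> B"
  proof (rule set_eqI, clarify)
    fix x x' :: "'a list"
    show "(x,x') \<in> T (Suc (Suc m)) a \<longleftrightarrow> (x,x') \<in> A \<union> B"
    proof
      assume "(x,x') \<in> T (Suc (Suc m)) a"
      then obtain x0 y zs where x: "x = x0#y#zs" "length zs = m" "ch a (x0#y#zs) x'"
        unfolding T_def by (auto simp: length_Suc_conv)
      then obtain x0' ys where x': "x' = x0'#ys" "x0*x0' = 1 + a*y" "ch x0 (y#zs) ys"
        using ch_cons2 by metis
      show "(x,x') \<in> A \<union> B"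
      proof (cases "x0 = 0")
        case True
        then have "1 + a*y = 0" using x'(2) by simp
        then have "a*y = -1" by (metis add.commute add_eq_0_iff)
        then have "y = -1/a" using assms by (auto simp: field_simps)
        then have "(y#zs, ys) \<in> Bs" using x x' True unfolding Bs_def T_def by auto
        then have "(x,x') \<in> B" unfolding B_def using x x' True
          by (intro image_eqI[where x="((y#zs,ys),x0')"]) auto
        then show ?thesis by blast
      next
        case False
        then have "x0' = (1 + a*y)/x0" using x'(2) by (auto simp: field_simps)
        then have "(x,x') = f x0 (y#zs, ys)" unfolding f_def using x x' by simp
        moreover have "(y#zs, ys) \<in> T (Suc m) x0" using x x' unfolding T_def by auto
        ultimately show ?thesis unfolding A_def using False by blast
      qed
    next
      assume "(x,x') \<in> A \<union> B"
      then show "(x,x') \<in> T (Suc (Suc m)) a"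
      proof
        assume "(x,x') \<in> A"
        then obtain y xs ys where y: "y \<noteq> 0" "(xs,ys) \<in> T (Suc m) y" "(x,x') = f y (xs,ys)"
          unfolding A_def by auto
        then obtain z zs where "xs = z#zs" unfolding T_def by (cases xs) auto
        then show ?thesis using y unfolding f_def T_def by (auto simp: field_simps)
      next
        assume "(x,x') \<in> B"
        then obtain xs ys z where b: "(xs,ys) \<in> Bs" "(x,x') = (0#xs, z#ys)"
          unfolding B_def by auto
        then obtain w ws where "xs = w#ws" unfolding Bs_def T_def by (cases xs) auto
        then show ?thesis using b assms unfolding Bs_def T_def by (auto simp: field_simps)
      qed
    qed
  qed
  have disj: "A \<inter> B = {}" unfolding A_def B_def f_def by auto
  have fin: "finite A" "finite B"
    using split T_finite[of "Suc (Suc m)" a] by (metis finite_Un)+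
  have cardA: "card A = (\<Sum>y\<in>UNIV-{0}. card (T (Suc m) (y::'a)))"
    unfolding A_def
  proof (subst card_UN_disjoint)
    show "finite (UNIV - {0::'a})" by simp
    show "\<forall>i\<in>UNIV-{0}. finite (f i ` T (Suc m) i)" using T_finite by auto
    show "\<forall>i\<in>UNIV-{0}. \<forall>j\<in>UNIV-{0}. i \<noteq> j \<longrightarrow> f i ` T (Suc m) i \<inter> f j ` T (Suc m) j = {}"
      unfolding f_def by auto
    show "(\<Sum>i\<in>UNIV-{0}. card (f i ` T (Suc m) i)) = (\<Sum>y\<in>UNIV-{0}. card (T (Suc m) (y::'a)))"
      by (intro sum.cong refl card_image) (auto simp: inj_on_def f_def)
  qed
  have cardB: "card B = CARD('a) * card (T m (-1/a))"
  proof -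
    have "card B = card (Bs \<times> (UNIV::'a set))"
      unfolding B_def by (rule card_image) (auto simp: inj_on_def)
    also have "\<dots> = card Bs * CARD('a)" by (simp add: card_cartesian_product)
    also have "card Bs = card (T m (-1/a))" unfolding Bs_def
      by (rule card_T_hd) (use assms in simp)
    finally show ?thesis by simp
  qed
  show ?thesis using split disj fin cardA cardB by (simp add: card_Un_disjoint)
qed

definition E :: "real \<Rightarrow> nat \<Rightarrow> real" where
  "E q n = (if even n then (q^(n+2)-1)/(q^2-1) else (q^((n+1) div 2)-1)*(q^((n+3) div 2)-1)/(q^2-1))"

lemma E_forms:
  fixes q :: real and k :: nat
  defines "Q \<equiv> q^k"
  shows "E q (2*k) = (Q*Q*q^2-1)/(q^2-1)"
    and "E q (2*k+1) = (Q*q-1)*(Q*q^2-1)/(q^2-1)"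
    and "E q (2*k+2) = (Q*Q*q^4-1)/(q^2-1)"
    and "E q (2*k+3) = (Q*q^2-1)*(Q*q^3-1)/(q^2-1)"
proof -
  have a: "(2*k+1+1) div 2 = k+1" "(2*k+1+3) div 2 = k+2" "(2*k+3+1) div 2 = k+2" "(2*k+3+3) div 2 = k+3"
    by presburger+
  have p: "q^(2*k+2) = Q*Q*q^2" "q^(2*k+2+2) = Q*Q*q^4" "q^(k+1) = Q*q" "q^(k+2) = Q*q^2" "q^(k+3) = Q*q^3"
    unfolding Q_def by (simp_all add: power_add power_mult_distrib mult_2 power_mult power2_eq_square power4_eq_xxxx)
  show "E q (2*k) = (Q*Q*q^2-1)/(q^2-1)" using p by (simp add: E_def)
  show "E q (2*k+1) = (Q*q-1)*(Q*q^2-1)/(q^2-1)" using p a by (simp add: E_def)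
  show "E q (2*k+2) = (Q*Q*q^4-1)/(q^2-1)" using p
    by (simp add: E_def add.assoc)
  have "odd (2*k+3)" by simp
  then show "E q (2*k+3) = (Q*q^2-1)*(Q*q^3-1)/(q^2-1)" unfolding E_def a p by simp
qed

lemma qd: "(q::real) > 1 \<Longrightarrow> q^2 - 1 \<noteq> 0"
  by (simp add: power2_eq_square) (smt (verit) mult_less_cancel_right2)

lemma alg1: assumes "q > 1" shows "E q (2*k+2) = (q-1)*E q (2*k+1) + q^(k+1) + q*E q (2*k)"
proof -
  define Q where "Q = q^k"
  define d where "d = q^2 - 1"
  have dn: "d \<noteq> 0" using qd[OF assms] d_def by simp
  have num: "Q*Q*q^4-1 = (q-1)*((Q*q-1)*(Q*q^2-1)) + (Q*q)*d + q*(Q*Q*q^2-1)"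
    unfolding d_def by algebra
  have "(q-1)*((Q*q-1)*(Q*q^2-1)/d) + Q*q + q*((Q*Q*q^2-1)/d) = ((q-1)*((Q*q-1)*(Q*q^2-1)) + (Q*q)*d + q*(Q*Q*q^2-1))/d"
    using dn by (simp add: field_simps)
  then show ?thesis unfolding E_forms Q_def[symmetric] d_def[symmetric] num[symmetric]
    by (simp add: Q_def ac_simps)
qed

lemma alg2: assumes "q > 1" shows "E q (2*k+3) = (q-1)*E q (2*k+2) + q*E q (2*k+1)"
proof -
  define Q where "Q = q^k"
  define d where "d = q^2 - 1"
  have dn: "d \<noteq> 0" using qd[OF assms] d_def by simp
  have num: "(Q*q^2-1)*(Q*q^3-1) = (q-1)*(Q*Q*q^4-1) + q*((Q*q-1)*(Q*q^2-1))"
    by algebra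
  have "(q-1)*((Q*Q*q^4-1)/d) + q*((Q*q-1)*(Q*q^2-1)/d) = ((q-1)*(Q*Q*q^4-1) + q*((Q*q-1)*(Q*q^2-1)))/d"
    using dn by (simp add: field_simps)
  then show ?thesis unfolding E_forms Q_def[symmetric] d_def[symmetric] num
    by simp
qed

lemma card_ge2: "CARD('a::{finite,field}) \<ge> 2"
proof -
  have "card {0::'a, 1} = 2" by simp
  moreover have "card {0::'a, 1} \<le> CARD('a)" by (rule card_mono) auto
  ultimately show ?thesis by simp
qed

lemma neg_inv_pow:
  fixes a :: "'a::field"
  assumes "a \<noteq> 0"
  shows "(-1/a = (-1)^(k+1)) = (a = (-1)^(k+2))"
proof -
  have s: "(-1::'a)^k * (-1)^k = 1" by (metis power_add power_minus1_even mult_2)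
  have "(-1/a = (-1)^(k+1)) \<longleftrightarrow> 1 = a * (-1)^k" using assms by (auto simp: field_simps)
  also have "\<dots> \<longleftrightarrow> a = (-1)^k" using s by (metis mult.commute mult.right_neutral mult.assoc)
  finally show ?thesis by simp
qed

lemma main:
  fixes a :: "'a::{finite,field}"
  assumes "a \<noteq> 0"
  shows "real (card (T n a)) = E (real CARD('a)) n + (if odd n \<and> a = (-1)^((n+1) div 2) then real CARD('a)^((n+1) div 2) else 0)"
  using assms
proof (induction n arbitrary: a rule: less_induct)
  case (less n)
  define q where "q = real CARD('a)"
  have q1: "q > 1" unfolding q_def using card_ge2[where 'a='a] by simp
  have dn: "q^2 - 1 \<noteq> 0" using qd[OF q1] .
  have sumF: "(\<Sum>y\<in>UNIV-{0}. real (card (T k (y::'a)))) = (q-1)*E q k + (if odd k then q^((k+1) div 2) else 0)"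
    if "k < n" for k
  proof -
    have "(\<Sum>y\<in>UNIV-{0}. real (card (T k (y::'a)))) =
          (\<Sum>y\<in>UNIV-{0::'a}. E q k + (if odd k \<and> y = (-1)^((k+1) div 2) then q^((k+1) div 2) else 0))"
      by (rule sum.cong[OF refl]) (use less.IH[OF that] in \<open>simp add: q_def\<close>)
    also have "\<dots> = (q-1)*E q k + (\<Sum>y\<in>UNIV-{0::'a}. (if odd k \<and> y = (-1)^((k+1) div 2) then q^((k+1) div 2) else 0))"
    proof -
      have "card (UNIV - {0::'a}) = CARD('a) - 1" by (simp add: card_Diff_singleton)
      then have "real (card (UNIV - {0::'a})) = q - 1" unfolding q_def using card_ge2[where 'a='a] by simp
      then show ?thesis by (simp add: sum.distrib)
    qed
    also have "(\<Sum>y\<in>UNIV-{0::'a}. (if odd k \<and> y = (-1)^((k+1) div 2) then q^((k+1) div 2) else 0)) = (if odd k then q^((k+1) div 2) else 0)"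
      by (cases "odd k") (simp_all add: sum.delta')
    finally show ?thesis .
  qed
  show ?case
  proof (cases n)
    case 0
    then show ?thesis using dn by (simp add: card_T0 E_def q_def[symmetric] power2_eq_square)
  next
    case (Suc n')
    show ?thesis
    proof (cases n')
      case 0
      have "E q 1 = q - 1" using dn by (simp add: E_def)
      moreover have "real (CARD('a) - 1) = q - 1" unfolding q_def using card_ge2[where 'a='a] by simp
      ultimately have "real (card (T 1 a)) = q - 1 + (if a = -1 then q else 0)"
        using card_T1[of a] card_ge2[where 'a='a] by (simp add: q_def of_nat_diff)
      then show ?thesis using Suc 0 \<open>E q 1 = q - 1\<close> by (simp add: q_def[symmetric])
    next
      case (Suc m)
      have n: "n = Suc (Suc m)" using \<open>n = Suc n'\<close> Suc by simp
      have inv: "-1/a \<noteq> 0" using less.prems by simp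
      have lt: "Suc m < n" "m < n" using n by simp_all
      have h1: "(\<Sum>y\<in>UNIV-{0}. real (card (T (Suc m) (y::'a)))) = (q-1)*E q (Suc m) + (if odd (Suc m) then q^((Suc m+1) div 2) else 0)"
        by (rule sumF[OF lt(1)])
      have h2: "real (card (T m (-1/a))) = E q m + (if odd m \<and> -1/a = (-1)^((m+1) div 2) then q^((m+1) div 2) else 0)"
        using less.IH[OF lt(2) inv] by (simp add: q_def)
      have "real (card (T n a)) = (\<Sum>y\<in>UNIV-{0}. real (card (T (Suc m) (y::'a)))) + q * real (card (T m (-1/a)))"
        unfolding n card_T_step[OF less.prems] by (simp add: q_def of_nat_sum)
      then have step: "real (card (T n a)) = (q-1)*E q (Suc m) + (if odd (Suc m) then q^((Suc m+1) div 2) else 0)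
          + q * (E q m + (if odd m \<and> -1/a = (-1)^((m+1) div 2) then q^((m+1) div 2) else 0))"
        unfolding h1 h2 .
      show ?thesis
      proof (cases "even m")
        case True
        then obtain k where k: "m = 2*k" by blast
        have e: "(2*k+1+1) div 2 = k+1" by presburger
        have "Suc m = 2*k+1" "n = 2*k+2" using k n by simp_all
        then show ?thesis using step alg1[OF q1, of k] k e by (simp add: q_def[symmetric])
      next
        case False
        then obtain k where k: "m = 2*k+1" by (metis oddE)
        have e: "(m+1) div 2 = k+1" "(n+1) div 2 = k+2" using k n by presburger+
        have o: "odd m" "even (Suc m)" "odd n" using k n by simp_all
        have nn: "Suc m = 2*k+2" "n = 2*k+3" "m = 2*k+1" using k n by simp_all
        have step2: "real (card (T n a)) = (q-1)*E q (2*k+2) + q * (E q (2*k+1) + (if a = (-1)^(k+2) then q^(k+1) else 0))"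
        proof -
          have "-1/a = (-1)^(k+1) \<longleftrightarrow> a = (-1)^(k+2)" by (rule neg_inv_pow[OF less.prems])
          then show ?thesis using step o unfolding e(1) by (simp only: nn(1) nn(3) if_True if_False simp_thms) simp
        qed
        have pw: "q*q^(k+1) = q^(k+2)" by simp
        have A: "real (card (T n a)) = E q (2*k+3) + (if a = (-1)^(k+2) then q^(k+2) else 0)"
          using step2 alg2[OF q1, of k] pw by (cases "a = (-1)^(k+2)") (simp_all add: algebra_simps)
        show ?thesis unfolding e(2) q_def[symmetric] using A o(3) nn(2) by simp
      qed
    qed
  qed
qed


theorem mainTheorem6:
  fixes alpha :: "'a::{finite,field}" and n :: nat
  defines "q \<equiv> real CARD('a)"
  assumes "alpha \<noteq> 0" and "n \<ge> 1"
  shows "(even n \<longrightarrow> real (N_A n alpha) = (q ^ (n + 2) - 1) / (q ^ 2 - 1))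
       \<and> (odd n \<and> alpha \<noteq> (-1) ^ ((n + 1) div 2) \<longrightarrow>
            real (N_A n alpha) = (q ^ ((n + 1) div 2) - 1) * (q ^ ((n + 3) div 2) - 1) / (q ^ 2 - 1))
       \<and> (odd n \<longrightarrow>
            real (N_A n ((-1) ^ ((n + 1) div 2) :: 'a)) =
              (q ^ ((n + 1) div 2) - 1) * (q ^ ((n + 3) div 2) - 1) / (q ^ 2 - 1) + q ^ ((n + 1) div 2))"
proof -
  have NA: "real (N_A n b) = E q n + (if odd n \<and> b = (-1)^((n+1) div 2) then q^((n+1) div 2) else 0)"
    if "b \<noteq> 0" for b :: 'a
    unfolding N_A_def X_eq_T[OF assms(3)] q_def using main[OF that] .
  have nz: "((-1)^((n + 1) div 2) :: 'a) \<noteq> 0" by simp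
  show ?thesis
    using NA[OF assms(2)] NA[OF nz] by (auto simp: E_def)
qed

end
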